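(* Let $R$ be a ring and $\mathfrak a\in\mathrm{Ass}(R)$. Then: (1) $\mathrm{Den}(R,\mathfrak a)$ is an ordered abelian semigroup under $S_1S_2:=\langle S_1,S_2\rangle$ (the multiplicative subsemigroup of $R$ generated by $S_1,S_2$): for $S_1,S_2,S_3\in\mathrm{Den}(R,\mathfrak a)$, $S_1S_2\in\mathrm{Den}(R,\mathfrak a)$, $S_1S_2=S_2S_1$, and $S_1\subseteq S_2$ implies $S_1S_3\subseteq S_2S_3$; (2) $S_{\mathfrak a}(R):=\bigcup_{S\in\mathrm{Den}(R,\mathfrak a)}S$ belongs to $\mathrm{Den}(R,\mathfrak a)$ and is its largest element; (3) for any non-empty family $S_i\in\mathrm{Den}(R,\mathfrak a)$, $i\in I$, the set $\langle S_i\mid i\in I\rangle:=\bigcup_{\emptyset\ne J\subseteq I,|J|<\infty}\prod_{j\in J}S_j$ belongs to $\mathrm{Den}(R,\mathfrak a)$ and is the least upper bound of $\{S_i\}_{i\in I}$ in $\mathrm{Den}(R,\mathfrak a)$.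
   Context: Rings are associative with $1$. A multiplicatively closed subset $S$ ($1\in S$, $0\notin S$) is a left (resp. right) Ore set if $Sr\cap Rs\neq\emptyset$ (resp. $rS\cap sR\neq\emptyset$) for all $r\in R,s\in S$. A left denominator set is a left Ore set $S$ such that $rs=0$ ($s\in S$) implies $tr=0$ for some $t\in S$; a right denominator set is defined symmetrically. $\mathrm{Den}(R)$ is the set of subsets that are both left and right denominator sets; for $S\in\mathrm{Den}(R)$, $\mathrm{ass}(S):=\{r\mid sr=0\text{ for some }s\in S\}=\{r\mid rs=0\text{ for some }s\in S\}$. $\mathrm{Ass}(R):=\{\mathrm{ass}(S)\mid S\in\mathrm{Den}(R)\}$ and $\mathrm{Den}(R,\mathfrak a):=\{S\in\mathrm{Den}(R)\mid\mathrm{ass}(S)=\mathfrak a\}$. *)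

theory Defs
  imports Main
begin

definition mult_closed :: "'a::ring_1 set \<Rightarrow> bool" where
  "mult_closed S \<longleftrightarrow> 1 \<in> S \<and> 0 \<notin> S \<and> (\<forall>s\<in>S. \<forall>t\<in>S. s * t \<in> S)"

definition left_ore :: "'a::ring_1 set \<Rightarrow> bool" where
  "left_ore S \<longleftrightarrow> mult_closed S \<and>
     (\<forall>r. \<forall>s\<in>S. \<exists>s'\<in>S. \<exists>r'. s' * r = r' * s)"

definition right_ore :: "'a::ring_1 set \<Rightarrow> bool" where
  "right_ore S \<longleftrightarrow> mult_closed S \<and>
     (\<forall>r. \<forall>s\<in>S. \<exists>s'\<in>S. \<exists>r'. r * s' = s * r')"

definition left_den :: "'a::ring_1 set \<Rightarrow> bool" where
  "left_den S \<longleftrightarrow> left_ore S \<and>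
     (\<forall>r. \<forall>s\<in>S. r * s = 0 \<longrightarrow> (\<exists>t\<in>S. t * r = 0))"

definition right_den :: "'a::ring_1 set \<Rightarrow> bool" where
  "right_den S \<longleftrightarrow> right_ore S \<and>
     (\<forall>r. \<forall>s\<in>S. s * r = 0 \<longrightarrow> (\<exists>t\<in>S. r * t = 0))"

definition Den :: "'a::ring_1 set set" where
  "Den = {S. left_den S \<and> right_den S}"

definition ass :: "'a::ring_1 set \<Rightarrow> 'a set" where
  "ass S = {r. \<exists>s\<in>S. s * r = 0}"

definition Ass :: "'a::ring_1 set set" where
  "Ass = ass ` Den"

definition Den_at :: "'a::ring_1 set \<Rightarrow> 'a set set" where
  "Den_at \<aa> = {S \<in> Den. ass S = \<aa>}"

inductive_set sgen :: "'a::ring_1 set \<Rightarrow> 'a set" for X where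
  base: "x \<in> X \<Longrightarrow> x \<in> sgen X"
| mult: "x \<in> sgen X \<Longrightarrow> y \<in> sgen X \<Longrightarrow> x * y \<in> sgen X"

definition den_prod :: "'a::ring_1 set \<Rightarrow> 'a set \<Rightarrow> 'a set" where
  "den_prod S1 S2 = sgen (S1 \<union> S2)"

definition S_max :: "'a::ring_1 set \<Rightarrow> 'a set" where
  "S_max \<aa> = \<Union> (Den_at \<aa>)"

definition fam_gen :: "'i set \<Rightarrow> ('i \<Rightarrow> 'a::ring_1 set) \<Rightarrow> 'a set" where
  "fam_gen I S = sgen (\<Union>i\<in>I. S i)"

end

theory Submission
  imports Defs
begin

lemma sgen_least: "X \<subseteq> Y \<Longrightarrow> (\<forall>x\<in>Y. \<forall>y\<in>Y. x * y \<in> Y) \<Longrightarrow> sgen X \<subseteq> Y"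
proof
  fix z assume "X \<subseteq> Y" "\<forall>x\<in>Y. \<forall>y\<in>Y. x * y \<in> Y" "z \<in> sgen X"
  from \<open>z \<in> sgen X\<close> show "z \<in> Y" using \<open>X \<subseteq> Y\<close> \<open>\<forall>x\<in>Y. \<forall>y\<in>Y. x * y \<in> Y\<close>
    by (induction z rule: sgen.induct) auto
qed

lemma sgen_mono: "X \<subseteq> Y \<Longrightarrow> sgen X \<subseteq> sgen Y"
  by (rule sgen_least) (auto intro: sgen.intros)

lemma sgen_sup: "X \<subseteq> sgen X"
  by (auto intro: sgen.intros)

lemma sgen_sgen_Un: "sgen (sgen A \<union> B) = sgen (A \<union> B)"
proof
  show "sgen (sgen A \<union> B) \<subseteq> sgen (A \<union> B)"
    apply (rule sgen_least)
    using sgen_mono[of A "A \<union> B"] by (auto intro: sgen.intros)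
  show "sgen (A \<union> B) \<subseteq> sgen (sgen A \<union> B)"
    apply (rule sgen_mono) using sgen_sup[of A] by auto
qed

lemma ass_left:
  assumes "S \<in> Den_at a" shows "r \<in> a \<longleftrightarrow> (\<exists>s\<in>S. s * r = 0)"
  using assms by (auto simp: Den_at_def ass_def)

lemma ass_right:
  assumes "S \<in> Den_at a" shows "r \<in> a \<longleftrightarrow> (\<exists>s\<in>S. r * s = 0)"
proof -
  have D: "left_den S" "right_den S" "ass S = a" using assms by (auto simp: Den_at_def Den_def)
  show ?thesis
  proof
    assume "r \<in> a"
    then obtain s where "s \<in> S" "s * r = 0" using D(3) by (auto simp: ass_def)
    then show "\<exists>s\<in>S. r * s = 0" using D(2) by (auto simp: right_den_def)
  next
    assume "\<exists>s\<in>S. r * s = 0"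
    then obtain s where "s \<in> S" "r * s = 0" by auto
    then obtain t where "t \<in> S" "t * r = 0" using D(1) unfolding left_den_def by blast
    then show "r \<in> a" using D(3) by (auto simp: ass_def)
  qed
qed

lemma mc: "S \<in> Den_at a \<Longrightarrow> mult_closed S"
  by (auto simp: Den_at_def Den_def left_den_def left_ore_def)

lemma main:
  assumes F: "F \<subseteq> Den_at a" and S0: "S0 \<in> F"
  shows "sgen (\<Union>F) \<in> Den_at a"
proof -
  let ?T = "sgen (\<Union>F)"
  have S0a: "S0 \<in> Den_at a" using F S0 by auto
  have mc0: "mult_closed S0" using mc[OF S0a] .
  have claim: "(\<forall>r. t * r = 0 \<longrightarrow> r \<in> a) \<and> (\<forall>r. r * t = 0 \<longrightarrow> r \<in> a)" if "t \<in> ?T" for t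
    using that
  proof (induction t rule: sgen.induct)
    case (base x)
    then obtain S where "S \<in> F" "x \<in> S" by auto
    then have "S \<in> Den_at a" using F by auto
    then show ?case using ass_left[of S a] ass_right[of S a] \<open>x \<in> S\<close> by blast
  next
    case (mult x y)
    have 1: "r \<in> a" if "x * y * r = 0" for r
    proof -
      have "y * r \<in> a" using mult.IH(1) that by (simp add: mult.assoc)
      then obtain s where s: "s \<in> S0" "y * r * s = 0" using ass_right[OF S0a] by blast
      then have "r * s \<in> a" using mult.IH(2) by (simp add: mult.assoc)
      then obtain s' where s': "s' \<in> S0" "r * s * s' = 0" using ass_right[OF S0a] by blast
      have "s * s' \<in> S0" using mc0 s s' by (auto simp: mult_closed_def)
      then show ?thesis using ass_right[OF S0a] s' by (metis mult.assoc)
    qed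
    have 2: "r \<in> a" if "r * (x * y) = 0" for r
    proof -
      have "r * x \<in> a" using mult.IH(2) that by (simp add: mult.assoc)
      then obtain s where s: "s \<in> S0" "s * (r * x) = 0" using ass_left[OF S0a] by blast
      then have "s * r \<in> a" using mult.IH(1) by (simp add: mult.assoc)
      then obtain s' where s': "s' \<in> S0" "s' * (s * r) = 0" using ass_left[OF S0a] by blast
      have "s' * s \<in> S0" using mc0 s s' by (auto simp: mult_closed_def)
      then show ?thesis using ass_left[OF S0a] s' by (metis mult.assoc)
    qed
    show ?case using 1 2 by blast
  qed
  have oneT: "1 \<in> ?T" using S0 mc0 by (auto simp: mult_closed_def intro: sgen.base)
  have zeroT: "0 \<notin> ?T"
  proof
    assume "0 \<in> ?T"
    then have "(1::'a) \<in> a" using claim by fastforce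
    then obtain s where "s \<in> S0" "s * 1 = 0" using ass_left[OF S0a] by blast
    then show False using mc0 by (auto simp: mult_closed_def)
  qed
  have mcT: "mult_closed ?T" using oneT zeroT by (auto simp: mult_closed_def intro: sgen.mult)
  have lore: "\<forall>r. \<exists>t'\<in>?T. \<exists>r'. t' * r = r' * t" if "t \<in> ?T" for t
    using that
  proof (induction t rule: sgen.induct)
    case (base x)
    then obtain S where "S \<in> F" "x \<in> S" by auto
    then have "S \<in> Den_at a" using F by auto
    then have "left_ore S" by (auto simp: Den_at_def Den_def left_den_def)
    then show ?case using \<open>x \<in> S\<close> \<open>S \<in> F\<close> unfolding left_ore_def by (meson UnionI sgen.base)
  next
    case (mult x y)
    show ?case
    proof
      fix r
      obtain t2 r2 where "t2 \<in> ?T" "t2 * r = r2 * y" using mult.IH(2) by blast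
      moreover obtain t1 r1 where "t1 \<in> ?T" "t1 * r2 = r1 * x" using mult.IH(1) by blast
      ultimately have "t1 * t2 \<in> ?T" "(t1 * t2) * r = r1 * (x * y)"
        by (auto intro: sgen.mult simp: mult.assoc) (metis mult.assoc)
      then show "\<exists>t'\<in>?T. \<exists>r'. t' * r = r' * (x * y)" by blast
    qed
  qed
  have rore: "\<forall>r. \<exists>t'\<in>?T. \<exists>r'. r * t' = t * r'" if "t \<in> ?T" for t
    using that
  proof (induction t rule: sgen.induct)
    case (base x)
    then obtain S where "S \<in> F" "x \<in> S" by auto
    then have "S \<in> Den_at a" using F by auto
    then have "right_ore S" by (auto simp: Den_at_def Den_def right_den_def)
    then show ?case using \<open>x \<in> S\<close> \<open>S \<in> F\<close> unfolding right_ore_def by (meson UnionI sgen.base)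
  next
    case (mult x y)
    show ?case
    proof
      fix r
      obtain t1 r1 where "t1 \<in> ?T" "r * t1 = x * r1" using mult.IH(1) by blast
      moreover obtain t2 r2 where "t2 \<in> ?T" "r1 * t2 = y * r2" using mult.IH(2) by blast
      ultimately have "t1 * t2 \<in> ?T" "r * (t1 * t2) = (x * y) * r2"
        by (auto intro: sgen.mult simp: mult.assoc) (metis mult.assoc)
      then show "\<exists>t'\<in>?T. \<exists>r'. r * t' = (x * y) * r'" by blast
    qed
  qed
  have S0T: "S0 \<subseteq> ?T" using S0 by (auto intro: sgen.base)
  have ld: "left_den ?T" unfolding left_den_def left_ore_def
  proof (intro conjI mcT ballI allI impI)
    fix r s assume "s \<in> ?T" then show "\<exists>s'\<in>?T. \<exists>r'. s' * r = r' * s" using lore by blast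
  next
    fix r s assume "s \<in> ?T" "r * s = 0"
    then have "r \<in> a" using claim by blast
    then show "\<exists>t\<in>?T. t * r = 0" using ass_left[OF S0a] S0T by blast
  qed
  have rd: "right_den ?T" unfolding right_den_def right_ore_def
  proof (intro conjI mcT ballI allI impI)
    fix r s assume "s \<in> ?T" then show "\<exists>s'\<in>?T. \<exists>r'. r * s' = s * r'" using rore by blast
  next
    fix r s assume "s \<in> ?T" "s * r = 0"
    then have "r \<in> a" using claim by blast
    then show "\<exists>t\<in>?T. r * t = 0" using ass_right[OF S0a] S0T by blast
  qed
  have "ass ?T = a"
  proof
    show "ass ?T \<subseteq> a" using claim by (auto simp: ass_def)
    show "a \<subseteq> ass ?T" using ass_left[OF S0a] S0T by (auto simp: ass_def)
  qed
  then show ?thesis using ld rd by (auto simp: Den_at_def Den_def)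
qed

lemma T_closed: "T \<in> Den_at a \<Longrightarrow> \<forall>x\<in>T. \<forall>y\<in>T. x * y \<in> T"
  using mc by (auto simp: mult_closed_def)

theorem theorem4p1:
  fixes \<aa> :: "'a::ring_1 set"
  assumes "\<aa> \<in> Ass"
  shows "(\<forall>S1\<in>Den_at \<aa>. \<forall>S2\<in>Den_at \<aa>. \<forall>S3\<in>Den_at \<aa>.
            den_prod S1 S2 \<in> Den_at \<aa>
          \<and> den_prod S1 S2 = den_prod S2 S1
          \<and> den_prod (den_prod S1 S2) S3 = den_prod S1 (den_prod S2 S3)
          \<and> (S1 \<subseteq> S2 \<longrightarrow> den_prod S1 S3 \<subseteq> den_prod S2 S3))
       \<and> (S_max \<aa> \<in> Den_at \<aa> \<and> (\<forall>S\<in>Den_at \<aa>. S \<subseteq> S_max \<aa>))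
       \<and> (\<forall>(I::'i set) (S::'i \<Rightarrow> 'a set). I \<noteq> {} \<longrightarrow> (\<forall>i\<in>I. S i \<in> Den_at \<aa>) \<longrightarrow>
            fam_gen I S \<in> Den_at \<aa>
          \<and> (\<forall>i\<in>I. S i \<subseteq> fam_gen I S)
          \<and> (\<forall>T\<in>Den_at \<aa>. (\<forall>i\<in>I. S i \<subseteq> T) \<longrightarrow> fam_gen I S \<subseteq> T))"
proof -
  have P1: "den_prod S1 S2 \<in> Den_at \<aa>
          \<and> den_prod S1 S2 = den_prod S2 S1
          \<and> den_prod (den_prod S1 S2) S3 = den_prod S1 (den_prod S2 S3)
          \<and> (S1 \<subseteq> S2 \<longrightarrow> den_prod S1 S3 \<subseteq> den_prod S2 S3)"
    if h: "S1 \<in> Den_at \<aa>" "S2 \<in> Den_at \<aa>" "S3 \<in> Den_at \<aa>" for S1 S2 S3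
  proof (intro conjI impI)
    show "den_prod S1 S2 \<in> Den_at \<aa>"
      using main[of "{S1,S2}" \<aa> S1] h by (simp add: den_prod_def)
    show "den_prod S1 S2 = den_prod S2 S1" by (simp add: den_prod_def Un_commute)
    show "den_prod (den_prod S1 S2) S3 = den_prod S1 (den_prod S2 S3)"
      unfolding den_prod_def using sgen_sgen_Un[of "S1 \<union> S2" S3] sgen_sgen_Un[of "S2 \<union> S3" S1]
      by (simp add: Un_ac)
    assume "S1 \<subseteq> S2"
    then show "den_prod S1 S3 \<subseteq> den_prod S2 S3"
      unfolding den_prod_def by (intro sgen_mono) blast
  qed
  obtain S0 where S0: "S0 \<in> Den_at \<aa>" using assms by (auto simp: Ass_def Den_at_def)
  have G: "sgen (\<Union>(Den_at \<aa>)) \<in> Den_at \<aa>" using main[of "Den_at \<aa>" \<aa> S0] S0 by simp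
  have "sgen (\<Union>(Den_at \<aa>)) = \<Union>(Den_at \<aa>)"
  proof
    show "sgen (\<Union>(Den_at \<aa>)) \<subseteq> \<Union>(Den_at \<aa>)" using G by (rule Union_upper)
  qed (rule sgen_sup)
  then have P2: "S_max \<aa> \<in> Den_at \<aa> \<and> (\<forall>S\<in>Den_at \<aa>. S \<subseteq> S_max \<aa>)"
    using G by (auto simp: S_max_def)
  have P3: "fam_gen I S \<in> Den_at \<aa>
          \<and> (\<forall>i\<in>I. S i \<subseteq> fam_gen I S)
          \<and> (\<forall>T\<in>Den_at \<aa>. (\<forall>i\<in>I. S i \<subseteq> T) \<longrightarrow> fam_gen I S \<subseteq> T)"
    if I: "I \<noteq> {}" and S: "\<forall>i\<in>I. S i \<in> Den_at \<aa>" for I :: "'i set" and S :: "'i \<Rightarrow> 'a set"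
  proof (intro conjI)
    obtain i0 where "i0 \<in> I" using I by auto
    then show "fam_gen I S \<in> Den_at \<aa>"
      using main[of "S ` I" \<aa> "S i0"] S by (auto simp: fam_gen_def)
    show "\<forall>i\<in>I. S i \<subseteq> fam_gen I S" by (auto simp: fam_gen_def intro: sgen.base)
    show "\<forall>T\<in>Den_at \<aa>. (\<forall>i\<in>I. S i \<subseteq> T) \<longrightarrow> fam_gen I S \<subseteq> T"
    proof (intro ballI impI)
      fix T assume "T \<in> Den_at \<aa>" "\<forall>i\<in>I. S i \<subseteq> T"
      then show "fam_gen I S \<subseteq> T" unfolding fam_gen_def
        by (intro sgen_least T_closed) auto
    qed
  qed
  show ?thesis
  proof (intro conjI allI impI)
    show "\<forall>S1\<in>Den_at \<aa>. \<forall>S2\<in>Den_at \<aa>. \<forall>S3\<in>Den_at \<aa>.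
            den_prod S1 S2 \<in> Den_at \<aa>
          \<and> den_prod S1 S2 = den_prod S2 S1
          \<and> den_prod (den_prod S1 S2) S3 = den_prod S1 (den_prod S2 S3)
          \<and> (S1 \<subseteq> S2 \<longrightarrow> den_prod S1 S3 \<subseteq> den_prod S2 S3)"
      using P1 by blast
    show "S_max \<aa> \<in> Den_at \<aa>" using P2 by (rule conjunct1)
    show "\<forall>S\<in>Den_at \<aa>. S \<subseteq> S_max \<aa>" using P2 by (rule conjunct2)
    fix I :: "'i set" and S :: "'i \<Rightarrow> 'a set"
    assume "I \<noteq> {}" "\<forall>i\<in>I. S i \<in> Den_at \<aa>"
    note P = P3[OF this]
    show "fam_gen I S \<in> Den_at \<aa>" using P by (rule conjunct1)
    show "\<forall>i\<in>I. S i \<subseteq> fam_gen I S" using P by (rule conjunct2[THEN conjunct1])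
    show "\<forall>T\<in>Den_at \<aa>. (\<forall>i\<in>I. S i \<subseteq> T) \<longrightarrow> fam_gen I S \<subseteq> T" using P by (rule conjunct2[THEN conjunct2])
  qed
qed

end
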